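(* Suppose the lattice $\mathcal{Z}$ is integral, nicely invertible with respect to an inversion $\iota$, norm-Euclidean, unit-generated, and 3-remote. Then the associated continued fraction algorithm has the finite range property: there are finitely many positive-measure sets $U_1,\dots,U_J\subset K$ such that every nonempty cylinder $C_s$ satisfies $T^{|s|}C_s=U_j$ up to a Lebesgue-null set for some $j$.
   Context: $X=\mathbb{R}^d$ (including $\mathbb{C},\mathbb{H},\mathbb{O}$ as $\mathbb{R}^2,\mathbb{R}^4,\mathbb{R}^8$) with Euclidean norm, distance and dot product. $\iota:X\setminus\{0\}\to X\setminus\{0\}$ satisfies $|\iota x|=1/|x|$, $d(\iota x,\iota y)=d(x,y)/(|x||y|)$ (equivalently $\iota(x)=\mathcal{O}(x)/|x|^2$, $\mathcal{O}$ orthogonal) and $\iota\circ\iota=\mathrm{id}$; $\iota(0)=0$. $\mathcal{Z}$ is a discrete additive subgroup with compact quotient, $K=\{x:d(x,0)\le d(x,z)\ \forall z\in\mathcal{Z}\}$ its Dirichlet region with a boundary choice so each $x$ has a unique $[x]\in\mathcal{Z}$ with $x-[x]\in K$. $Tx=\iota x-[\iota x]$ ($x\ne0$), $T0=0$. Cylinders: $C_\emptyset=K$, $C_{as}=K\cap\iota(C_s+a)$ for $a\in\mathcal{Z}$. Integral: $z\cdot z\in\mathbb{Z}$ $\forall z\in\mathcal{Z}$. Nicely invertible: $|z|^2\iota(z)\in\mathcal{Z}$ for nonzero $z\in\mathcal{Z}$. Norm-Euclidean: $\sup_{x\in K}|x|<1$. Unit-generated: every element is a sum of lattice points of norm $1$.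 3-remote: $\inf_{x\in K}d(z,x)\ge1$ for all $z\in\mathcal{Z}$ with $|z|=\sqrt3$. *)

theory Defs
  imports "HOL-Analysis.Analysis"
begin

definition is_lattice :: "'a::euclidean_space set \<Rightarrow> bool" where
  "is_lattice Z \<longleftrightarrow>
     0 \<in> Z \<and> (\<forall>x\<in>Z. \<forall>y\<in>Z. x + y \<in> Z \<and> - x \<in> Z) \<and>
     (\<exists>e>0. \<forall>z\<in>Z. z \<noteq> 0 \<longrightarrow> e \<le> norm z) \<and>
     (\<exists>C. compact C \<and> (\<forall>x. \<exists>z\<in>Z. x - z \<in> C))"

definition is_inversion :: "('a::euclidean_space \<Rightarrow> 'a) \<Rightarrow> bool" where
  "is_inversion \<iota> \<longleftrightarrow>
     \<iota> 0 = 0 \<and>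
     (\<forall>x. x \<noteq> 0 \<longrightarrow> \<iota> x \<noteq> 0 \<and> norm (\<iota> x) = 1 / norm x \<and> \<iota> (\<iota> x) = x) \<and>
     (\<forall>x y. x \<noteq> 0 \<longrightarrow> y \<noteq> 0 \<longrightarrow>
        dist (\<iota> x) (\<iota> y) = dist x y / (norm x * norm y))"

definition dirichlet :: "'a::euclidean_space set \<Rightarrow> 'a set" where
  "dirichlet Z = {x. \<forall>z\<in>Z. dist x 0 \<le> dist x z}"

definition is_boundary_choice :: "'a::euclidean_space set \<Rightarrow> 'a set \<Rightarrow> bool" where
  "is_boundary_choice Z K \<longleftrightarrow> K \<subseteq> dirichlet Z \<and> (\<forall>x. \<exists>!z. z \<in> Z \<and> x - z \<in> K)"

definition lat_floor :: "'a::euclidean_space set \<Rightarrow> 'a set \<Rightarrow> 'a \<Rightarrow> 'a" where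
  "lat_floor Z K x = (THE z. z \<in> Z \<and> x - z \<in> K)"

definition cf_map :: "('a::euclidean_space \<Rightarrow> 'a) \<Rightarrow> 'a set \<Rightarrow> 'a set \<Rightarrow> 'a \<Rightarrow> 'a" where
  "cf_map \<iota> Z K x = (if x = 0 then 0 else \<iota> x - lat_floor Z K (\<iota> x))"

fun cylinder :: "('a::euclidean_space \<Rightarrow> 'a) \<Rightarrow> 'a set \<Rightarrow> 'a list \<Rightarrow> 'a set" where
  "cylinder \<iota> K [] = K"
| "cylinder \<iota> K (a # s) = K \<inter> \<iota> ` ((\<lambda>y. y + a) ` cylinder \<iota> K s)"

definition integral_lattice :: "'a::euclidean_space set \<Rightarrow> bool" where
  "integral_lattice Z \<longleftrightarrow> (\<forall>z\<in>Z. z \<bullet> z \<in> \<int>)"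

definition nicely_invertible :: "('a::euclidean_space \<Rightarrow> 'a) \<Rightarrow> 'a set \<Rightarrow> bool" where
  "nicely_invertible \<iota> Z \<longleftrightarrow> (\<forall>z\<in>Z. z \<noteq> 0 \<longrightarrow> (norm z)\<^sup>2 *\<^sub>R \<iota> z \<in> Z)"

definition norm_euclidean :: "'a::euclidean_space set \<Rightarrow> bool" where
  "norm_euclidean K \<longleftrightarrow> (SUP x\<in>K. norm x) < 1"

definition unit_generated :: "'a::euclidean_space set \<Rightarrow> bool" where
  "unit_generated Z \<longleftrightarrow>
     (\<forall>z\<in>Z. \<exists>us. set us \<subseteq> {u\<in>Z. norm u = 1} \<and> z = sum_list us)"

definition three_remote :: "'a::euclidean_space set \<Rightarrow> 'a set \<Rightarrow> bool" where
  "three_remote Z K \<longleftrightarrow> (\<forall>z\<in>Z. norm z = sqrt 3 \<longrightarrow> (INF x\<in>K. dist z x) \<ge> 1)"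

definition ae_eq :: "'a::euclidean_space set \<Rightarrow> 'a set \<Rightarrow> bool" where
  "ae_eq A B \<longleftrightarrow> (A - B) \<union> (B - A) \<in> null_sets lebesgue"

end

theory Submission
  imports Defs "HOL-Library.Multiset"
begin

fun Phi :: "('a::euclidean_space \<Rightarrow> 'a) \<Rightarrow> 'a list \<Rightarrow> 'a \<Rightarrow> 'a" where
  "Phi \<iota> [] p = p"
| "Phi \<iota> (a # s) p = \<iota> (Phi \<iota> s p + a)"

definition W :: "'a::euclidean_space set \<Rightarrow> 'a set \<Rightarrow> 'a set" where
  "W S V = {x. (\<forall>c\<in>S. 1 \<le> dist x c) \<and> (\<forall>v\<in>V. x \<bullet> v \<le> 0)}"

definition sd :: "'a set \<Rightarrow> 'a set \<Rightarrow> 'a set" where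
  "sd A B = (A - B) \<union> (B - A)"

locale cfs =
  fixes \<iota> :: "'a::euclidean_space \<Rightarrow> 'a" and Z K :: "'a set"
  assumes lat: "is_lattice Z"
    and inv: "is_inversion \<iota>"
    and bc: "is_boundary_choice Z K"
    and intg: "integral_lattice Z"
    and nice: "nicely_invertible \<iota> Z"
    and ne: "norm_euclidean (dirichlet Z)"
    and ug: "unit_generated Z"
    and tr: "three_remote Z (dirichlet Z)"
begin

abbreviation "D \<equiv> dirichlet Z"
definition "Uni = {u\<in>Z. norm u = 1}"

lemma Z0: "0 \<in> Z" and Zadd: "x \<in> Z \<Longrightarrow> y \<in> Z \<Longrightarrow> x + y \<in> Z"
  and Zneg: "x \<in> Z \<Longrightarrow> - x \<in> Z"
  using lat unfolding is_lattice_def by auto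

lemma Zdiff: "x \<in> Z \<Longrightarrow> y \<in> Z \<Longrightarrow> x - y \<in> Z"
  using Zadd[of x "-y"] Zneg[of y] by simp

lemma i0: "\<iota> 0 = 0" and inz: "x \<noteq> 0 \<Longrightarrow> \<iota> x \<noteq> 0"
  and inorm: "x \<noteq> 0 \<Longrightarrow> norm (\<iota> x) = 1 / norm x"
  and ii: "\<iota> (\<iota> x) = x"
  and idist: "x \<noteq> 0 \<Longrightarrow> y \<noteq> 0 \<Longrightarrow> dist (\<iota> x) (\<iota> y) = dist x y / (norm x * norm y)"
  using inv unfolding is_inversion_def by (auto, metis)

lemma iinner: assumes "x \<noteq> 0" "y \<noteq> 0"
  shows "\<iota> x \<bullet> \<iota> y = (x \<bullet> y) / ((norm x)^2 * (norm y)^2)"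
proof -
  have nx: "norm x > 0" "norm y > 0" using assms by auto
  have "(dist (\<iota> x) (\<iota> y))^2 = (dist x y)^2 / ((norm x)^2 * (norm y)^2)"
    using idist[OF assms] by (simp add: power_divide power_mult_distrib)
  moreover have "(dist (\<iota> x) (\<iota> y))^2 = (norm (\<iota> x))^2 + (norm (\<iota> y))^2 - 2 * (\<iota> x \<bullet> \<iota> y)"
    by (simp add: dist_norm power2_norm_eq_inner inner_diff_left inner_diff_right inner_commute)
  moreover have "(dist x y)^2 = (norm x)^2 + (norm y)^2 - 2 * (x \<bullet> y)"
    by (simp add: dist_norm power2_norm_eq_inner inner_diff_left inner_diff_right inner_commute)
  ultimately have "1/(norm x)^2 + 1/(norm y)^2 - 2 * (\<iota> x \<bullet> \<iota> y) =
     ((norm x)^2 + (norm y)^2 - 2 * (x \<bullet> y)) / ((norm x)^2 * (norm y)^2)"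
    using inorm assms by (simp add: power_divide)
  with nx show ?thesis by (simp add: field_simps)
qed

lemma half_int: "a \<in> Z \<Longrightarrow> b \<in> Z \<Longrightarrow> 2 * (a \<bullet> b) \<in> \<int>"
proof -
  assume a: "a \<in> Z" and b: "b \<in> Z"
  have "2 * (a \<bullet> b) = (a+b)\<bullet>(a+b) - a\<bullet>a - b\<bullet>b"
    by (simp add: inner_add_left inner_add_right inner_commute)
  moreover have "(a+b)\<bullet>(a+b) \<in> \<int>" "a\<bullet>a \<in> \<int>" "b\<bullet>b \<in> \<int>"
    using intg a b Zadd unfolding integral_lattice_def by auto
  ultimately show ?thesis by simp
qed

lemma normsq_int: "a \<in> Z \<Longrightarrow> (norm a)^2 \<in> \<int>"
  using intg unfolding integral_lattice_def by (simp add: power2_norm_eq_inner)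

lemma D_iff: "w \<in> D \<longleftrightarrow> (\<forall>z\<in>Z. 2 * (w \<bullet> z) \<le> (norm z)^2)"
proof -
  have "dist w 0 \<le> dist w z \<longleftrightarrow> 2 * (w \<bullet> z) \<le> (norm z)^2" for z
    by (simp add: dist_norm norm_le power2_norm_eq_inner inner_diff_left inner_diff_right inner_commute)
  then show ?thesis unfolding dirichlet_def by auto
qed

lemma Uni_Z: "u \<in> Uni \<Longrightarrow> u \<in> Z" and Uni_norm: "u \<in> Uni \<Longrightarrow> norm u = 1"
  unfolding Uni_def by auto

lemma Uni_neg: "u \<in> Uni \<Longrightarrow> - u \<in> Uni"
  unfolding Uni_def using Zneg by auto

lemma Uni_i: assumes "u \<in> Uni" shows "\<iota> u \<in> Uni"
proof -
  have "u \<noteq> 0" using assms Uni_norm by force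
  then show ?thesis using assms nice inorm unfolding Uni_def nicely_invertible_def by auto
qed

lemma D_bounded: "\<exists>B. \<forall>x\<in>D. norm x \<le> B"
proof -
  obtain C where C: "compact C" "\<forall>x. \<exists>z\<in>Z. x - z \<in> C"
    using lat unfolding is_lattice_def by blast
  obtain B where B: "\<forall>c\<in>C. norm c \<le> B"
    using compact_imp_bounded[OF C(1)] unfolding bounded_iff by blast
  have "norm x \<le> B" if "x \<in> D" for x
  proof -
    obtain z where z: "z \<in> Z" "x - z \<in> C" using C(2) by blast
    have "dist x 0 \<le> dist x z" using that z unfolding dirichlet_def by auto
    moreover have "norm (x - z) \<le> B" using B z by blast
    ultimately show ?thesis unfolding dist_norm by simp
  qed
  then show ?thesis by blast
qed

lemma zero_D: "0 \<in> D" unfolding dirichlet_def by simp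

definition "rho = (SUP x\<in>D. norm x)"

lemma rho: "x \<in> D \<Longrightarrow> norm x \<le> rho" and rho1: "rho < 1"
proof -
  have bdd: "bdd_above (norm ` D)" using D_bounded by (auto simp: bdd_above_def)
  show "x \<in> D \<Longrightarrow> norm x \<le> rho" unfolding rho_def by (rule cSUP_upper[OF _ bdd])
  show "rho < 1" using ne unfolding rho_def norm_euclidean_def .
qed

lemma K_D: "K \<subseteq> D" using bc unfolding is_boundary_choice_def by auto

lemma K_unique: "\<exists>!z. z \<in> Z \<and> x - z \<in> K" using bc unfolding is_boundary_choice_def by auto

lemma ZD: "z \<in> Z \<Longrightarrow> z \<in> D \<Longrightarrow> z = 0"
  unfolding dirichlet_def by auto

lemma zero_K: "0 \<in> K"
proof -
  obtain z where z: "z \<in> Z" "0 - z \<in> K" using K_unique by blast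
  then have "-z = 0" using ZD[of "-z"] Zneg K_D by auto
  then show ?thesis using z by simp
qed

lemma lat_floor_eq: "y \<in> K \<Longrightarrow> a \<in> Z \<Longrightarrow> lat_floor Z K (y + a) = a"
  unfolding lat_floor_def
  by (rule the1_equality[OF K_unique]) auto

lemma sep: "\<exists>e>0. \<forall>z\<in>Z. z \<noteq> 0 \<longrightarrow> e \<le> norm z"
  using lat unfolding is_lattice_def by blast

lemma finite_ball: "finite (Z \<inter> cball 0 r)"
proof -
  obtain e where e: "e > 0" "\<forall>z\<in>Z. z \<noteq> 0 \<longrightarrow> e \<le> norm z" using sep by blast
  have "uniform_discrete (Z \<inter> cball 0 r)"
    unfolding uniform_discrete_def
  proof (intro exI[of _ e] conjI ballI impI)
    fix x y assume xy: "x \<in> Z \<inter> cball 0 r" "y \<in> Z \<inter> cball 0 r" "dist x y < e"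
    show "x = y"
    proof (rule ccontr)
      assume "x \<noteq> y"
      then have "e \<le> norm (x - y)" using e xy Zdiff by auto
      then show False using xy by (simp add: dist_norm)
    qed
  qed (use e in auto)
  moreover have "bounded (Z \<inter> cball 0 r)" by (simp add: bounded_Int)
  ultimately show ?thesis using uniform_discrete_finite_iff by blast
qed

lemma finite_Uni: "finite Uni"
  by (rule finite_subset[OF _ finite_ball[of 1]]) (auto simp: Uni_def)

lemma sum_mset_inner: "(sum_mset M) \<bullet> u = sum_mset (image_mset (\<lambda>v. v \<bullet> u) M)"
  by (induction M) (auto simp: inner_add_left)

lemma sum_mset_nn: "(\<And>x. x \<in># M \<Longrightarrow> 0 \<le> f x) \<Longrightarrow> 0 \<le> sum_mset (image_mset f M)" for f :: "'a \<Rightarrow> real"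
  by (induction M) (auto intro: add_nonneg_nonneg)

lemma unit_dir_aux:
  "\<forall>M. size M = n \<longrightarrow> set_mset M \<subseteq> Uni \<longrightarrow> sum_mset M = z \<longrightarrow> z \<noteq> 0 \<longrightarrow> (\<exists>u\<in>Uni. 1 \<le> z \<bullet> u)"
proof (induction n rule: less_induct)
  case (less n)
  show ?case
  proof (intro allI impI)
    fix M assume M: "size M = n" "set_mset M \<subseteq> Uni" "sum_mset M = z" "z \<noteq> 0"
    have "M \<noteq> {#}" using M(3,4) by auto
    then obtain u where u: "u \<in># M" by (meson multiset_nonemptyE)
    have uU: "u \<in> Uni" using u M(2) by blast
    define M1 where "M1 = M - {#u#}"
    have MM1: "M = add_mset u M1" unfolding M1_def using u by simp
    show "\<exists>u\<in>Uni. 1 \<le> z \<bullet> u"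
    proof (cases "\<exists>v. v \<in># M1 \<and> u \<bullet> v < 0")
      case True
      then obtain v where v: "v \<in># M1" "u \<bullet> v < 0" by blast
      define R where "R = M1 - {#v#}"
      have M1R: "M1 = add_mset v R" unfolding R_def using v(1) by simp
      have MR: "M = add_mset u (add_mset v R)" using MM1 M1R by simp
      have vU: "v \<in> Uni" using M(2) MR by simp
      have RU: "set_mset R \<subseteq> Uni" using M(2) MR by simp
      have sR: "z = u + v + sum_mset R" using M(3) MR by (simp add: add.assoc)
      have szR: "size R + 2 = n" using M(1) MR by simp
      have uvZ: "u + v \<in> Z" using uU vU Zadd Uni_Z by blast
      have i2: "2 * (u \<bullet> v) \<in> \<int>" using half_int uU vU Uni_Z by blast
      have le1: "2 * (u \<bullet> v) \<le> -1"
      proof -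
        obtain k :: int where k: "2 * (u \<bullet> v) = of_int k" using i2 Ints_cases by metis
        have "real_of_int k < 0" using v(2) k by linarith
        then have "k \<le> -1" by simp
        then have "real_of_int k \<le> -1" by simp
        then show ?thesis using k by linarith
      qed
      have nuv: "(norm (u+v))^2 = 2 + 2 * (u \<bullet> v)"
        using uU vU Uni_norm by (simp add: power2_norm_eq_inner inner_add_left inner_add_right inner_commute norm_eq_1)
      have nint: "(norm (u+v))^2 \<in> \<int>" using normsq_int uvZ by blast
      have "(norm (u+v))^2 \<le> 1" using nuv le1 by simp
      then have "(norm (u+v))^2 = 0 \<or> (norm (u+v))^2 = 1"
      proof -
        obtain k :: int where k: "(norm (u+v))^2 = of_int k" using nint Ints_cases by metis
        have "real_of_int k \<ge> 0" using k by (metis zero_le_power2)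
        then have "k \<ge> 0" by simp
        moreover have "real_of_int k \<le> 1" using k \<open>(norm (u+v))^2 \<le> 1\<close> by linarith
        then have "k \<le> 1" by simp
        ultimately have "k = 0 \<or> k = 1" by linarith
        then show ?thesis using k by auto
      qed
      then show ?thesis
      proof
        assume "(norm (u+v))^2 = 0"
        then have "u + v = 0" by simp
        have "size R < n" using szR by simp
        moreover have "sum_mset R = z" using sR \<open>u + v = 0\<close> by simp
        ultimately show ?thesis using less M(4) RU by blast
      next
        assume "(norm (u+v))^2 = 1"
        then have "norm (u+v) = 1" by (metis norm_ge_zero power2_eq_1_iff neg_0_le_iff_le zero_le_one not_one_le_zero)
        define R' where "R' = add_mset (u+v) R"
        have "size R' < n" using szR R'_def by simp
        moreover have "set_mset R' \<subseteq> Uni" using RU uvZ \<open>norm (u+v) = 1\<close> R'_def by (simp add: Uni_def)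
        moreover have "sum_mset R' = z" using sR R'_def by simp
        ultimately show ?thesis using less M(4) by blast
      qed
    next
      case False
      have "z = u + sum_mset M1" using M(3) MM1 by simp
      then have e1: "z \<bullet> u = u \<bullet> u + sum_mset M1 \<bullet> u" by (simp add: inner_add_left)
      have e2: "u \<bullet> u = 1" using uU Uni_norm by (simp add: norm_eq_1)
      have e3: "sum_mset M1 \<bullet> u \<ge> 0"
        unfolding sum_mset_inner
        using False by (intro sum_mset_nn) (auto simp: inner_commute)
      have "1 \<le> z \<bullet> u" using e1 e2 e3 by linarith
      then show ?thesis using uU by blast
    qed
  qed
qed

lemma unit_dir: assumes "z \<in> Z" "z \<noteq> 0" shows "\<exists>u\<in>Uni. 1 \<le> z \<bullet> u"
proof -
  obtain us where us: "set us \<subseteq> Uni" "z = sum_list us"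
    using ug assms unfolding unit_generated_def Uni_def by blast
  then show ?thesis using unit_dir_aux[of "size (mset us)" z] assms
    by (metis set_mset_mset sum_mset_sum_list)
qed

lemma D1_aux:
  assumes w: "\<forall>u\<in>Uni. 2 * (w \<bullet> u) \<le> 1"
  shows "\<forall>z\<in>Z. (norm z)^2 \<le> real n \<longrightarrow> 2 * (w \<bullet> z) \<le> (norm z)^2"
proof (induction n)
  case 0
  then show ?case by auto
next
  case (Suc n)
  show ?case
  proof (intro ballI impI)
    fix z assume z: "z \<in> Z" "(norm z)^2 \<le> real (Suc n)"
    show "2 * (w \<bullet> z) \<le> (norm z)^2"
    proof (cases "(norm z)^2 \<le> real n")
      case True then show ?thesis using Suc z by blast
    next
      case False
      then have "z \<noteq> 0" by auto
      then obtain u where u: "u \<in> Uni" "1 \<le> z \<bullet> u" using unit_dir z by blast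
      have uu: "u \<bullet> u = 1" using u Uni_norm by (simp add: norm_eq_1)
      have n': "(norm (z - u))^2 = (norm z)^2 - 2 * (z \<bullet> u) + 1"
        using uu by (simp add: power2_norm_eq_inner inner_diff_left inner_diff_right inner_commute)
      have "z - u \<in> Z" using z u Zdiff Uni_Z by blast
      moreover have "(norm (z - u))^2 \<le> real n" using n' u z by simp
      ultimately have "2 * (w \<bullet> (z - u)) \<le> (norm (z - u))^2" using Suc by blast
      moreover have "2*(w \<bullet> z) = 2*(w \<bullet> (z-u)) + 2*(w \<bullet> u)" by (simp add: inner_diff_right)
      moreover have "2 * (w \<bullet> u) \<le> 1" using w u(1) by blast
      ultimately show ?thesis using n' u(2) by linarith
    qed
  qed
qed

lemma D1: assumes "\<forall>u\<in>Uni. 2 * (w \<bullet> u) \<le> 1" shows "w \<in> D"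
  unfolding D_iff
proof
  fix z assume "z \<in> Z"
  obtain n :: nat where "(norm z)^2 \<le> real n" using real_arch_simple by blast
  then show "2 * (w \<bullet> z) \<le> (norm z)^2" using D1_aux[OF assms] \<open>z \<in> Z\<close> by blast
qed



lemma halfD: "x \<in> D \<Longrightarrow> u \<in> Uni \<Longrightarrow> 2 * (x \<bullet> u) \<le> 1"
  using D_iff Uni_Z Uni_norm by fastforce

lemma one_le_iff_sq: "0 \<le> t \<Longrightarrow> (1 \<le> t) \<longleftrightarrow> (1 \<le> t^2)" for t :: real
  using abs_le_square_iff[of 1 t] by simp

lemma dist_ii: assumes "y \<noteq> 0" "c \<noteq> 0"
  shows "dist (\<iota> y) c = dist y (\<iota> c) * norm c / norm y"
proof -
  have "\<iota> c \<noteq> 0" using inz assms by blast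
  then have "dist (\<iota> y) (\<iota> (\<iota> c)) = dist y (\<iota> c) / (norm y * norm (\<iota> c))"
    using idist assms by blast
  then show ?thesis using ii[of c] inorm[OF assms(2)] assms by simp
qed

lemma Lgen: assumes "y \<noteq> 0" "c \<noteq> 0"
  shows "1 \<le> dist (\<iota> y) c \<longleftrightarrow> y \<bullet> y \<le> (c \<bullet> c) * (y \<bullet> y - 2 * (y \<bullet> \<iota> c)) + 1"
proof -
  have ny: "norm y > 0" and nc: "norm c > 0" using assms by auto
  have e: "dist (\<iota> y) c = (norm c * dist y (\<iota> c)) / norm y" using dist_ii[OF assms] by simp
  have "1 \<le> dist (\<iota> y) c \<longleftrightarrow> 1 * norm y \<le> norm c * dist y (\<iota> c)"
    unfolding e by (rule pos_le_divide_eq[OF ny])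
  also have "\<dots> \<longleftrightarrow> (norm y)^2 \<le> (norm c * dist y (\<iota> c))^2"
    using abs_le_square_iff[of "norm y" "norm c * dist y (\<iota> c)"] by simp
  also have "(norm c * dist y (\<iota> c))^2 = (norm c)^2 * ((norm y)^2 - 2 * (y \<bullet> \<iota> c) + (norm (\<iota> c))^2)"
    by (simp add: power_mult_distrib dist_norm power2_norm_eq_inner inner_diff_left inner_diff_right inner_commute)
  also have "(norm (\<iota> c))^2 = 1 / (norm c)^2" using inorm[OF assms(2)] by (simp add: power_divide)
  finally show ?thesis using nc by (simp add: power2_norm_eq_inner algebra_simps)
qed

lemma L1: assumes "y \<noteq> 0" shows "\<iota> y \<in> D \<longleftrightarrow> (\<forall>v\<in>Uni. 1 \<le> dist y v)"
proof
  assume yD: "\<iota> y \<in> D"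
  show "\<forall>v\<in>Uni. 1 \<le> dist y v"
  proof
    fix v assume v: "v \<in> Uni"
    have u: "\<iota> v \<in> Z" using Uni_i[OF v] Uni_Z by blast
    have nv: "norm v = 1" using v Uni_norm by blast
    then have "v \<noteq> 0" by auto
    have "dist (\<iota> y) 0 \<le> dist (\<iota> y) (\<iota> v)" using yD u unfolding dirichlet_def by blast
    then have "1 / norm y \<le> dist y v / norm y" using idist[OF assms \<open>v \<noteq> 0\<close>] inorm[OF assms] nv by simp
    then show "1 \<le> dist y v" using assms by (simp add: divide_le_cancel)
  qed
next
  assume H: "\<forall>v\<in>Uni. 1 \<le> dist y v"
  show "\<iota> y \<in> D"
  proof (rule D1, intro ballI)
    fix u assume u: "u \<in> Uni"
    have iu: "\<iota> u \<in> Uni" using Uni_i[OF u] .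
    have nu: "norm u = 1" using u Uni_norm by blast
    then have "u \<noteq> 0" by auto
    have "u \<bullet> u = 1" using nu by (simp add: norm_eq_1)
    have "1 \<le> dist y (\<iota> u)" using H iu by blast
    have "norm (\<iota> y) \<le> dist (\<iota> y) u"
    proof -
      have "dist (\<iota> y) u = dist y (\<iota> u) / norm y" using dist_ii[OF assms \<open>u \<noteq> 0\<close>] nu by simp
      moreover have "norm (\<iota> y) = 1 / norm y" using inorm[OF assms] .
      ultimately show ?thesis using \<open>1 \<le> dist y (\<iota> u)\<close> assms by (simp add: divide_right_mono)
    qed
    then have "\<iota> y \<bullet> \<iota> y \<le> (\<iota> y - u) \<bullet> (\<iota> y - u)" by (simp add: dist_norm norm_le)
    then show "2 * (\<iota> y \<bullet> u) \<le> 1" using \<open>u \<bullet> u = 1\<close>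
      by (simp add: inner_diff_left inner_diff_right inner_commute)
  qed
qed

definition "Z2 = {c\<in>Z. (norm c)^2 = 2}"

lemma finite_Z2: "finite Z2"
proof (rule finite_subset[OF _ finite_ball[of 2]])
  show "Z2 \<subseteq> Z \<inter> cball 0 2"
  proof
    fix c assume "c \<in> Z2"
    then have "c \<in> Z" "(norm c)^2 = 2" by (auto simp: Z2_def)
    moreover have "norm c \<le> 2"
    proof (rule ccontr)
      assume "\<not> norm c \<le> 2"
      then have "2 * 2 < norm c * norm c" by (intro mult_strict_mono) auto
      then show False using \<open>(norm c)^2 = 2\<close> by (simp add: power2_eq_square)
    qed
    ultimately show "c \<in> Z \<inter> cball 0 2" by simp
  qed
qed

lemma L2: assumes "y \<noteq> 0" "c \<in> Z2"
  shows "1 \<le> dist (\<iota> y) c \<longleftrightarrow> 1 \<le> dist y (2 *\<^sub>R \<iota> c)"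
proof -
  have cc: "c \<bullet> c = 2" using assms(2) by (simp add: Z2_def power2_norm_eq_inner)
  then have "c \<noteq> 0" by auto
  have ic: "\<iota> c \<bullet> \<iota> c = 1/2"
    using inorm[OF \<open>c \<noteq> 0\<close>] cc by (simp add: power2_norm_eq_inner[symmetric] power_divide)
  have "1 \<le> dist y (2 *\<^sub>R \<iota> c) \<longleftrightarrow> 1 \<le> (dist y (2 *\<^sub>R \<iota> c))^2"
    by (rule one_le_iff_sq) simp
  also have "(dist y (2 *\<^sub>R \<iota> c))^2 = y \<bullet> y - 4 * (y \<bullet> \<iota> c) + 4 * (\<iota> c \<bullet> \<iota> c)"
    by (simp add: dist_norm power2_norm_eq_inner inner_diff_left inner_diff_right inner_commute)
  finally show ?thesis using Lgen[OF assms(1) \<open>c \<noteq> 0\<close>] cc ic by (simp add: algebra_simps)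
qed

lemma L3: assumes "y \<noteq> 0" "c \<in> Uni"
  shows "1 \<le> dist (\<iota> y) c \<longleftrightarrow> y \<bullet> \<iota> c \<le> 1/2"
proof -
  have cc: "c \<bullet> c = 1" using assms(2) Uni_norm by (simp add: norm_eq_1)
  then have "c \<noteq> 0" by auto
  show ?thesis using Lgen[OF assms(1) \<open>c \<noteq> 0\<close>] cc by (simp add: algebra_simps)
qed

lemma L4: assumes "y \<noteq> 0" "v \<in> Uni"
  shows "\<iota> y \<bullet> v \<le> 0 \<longleftrightarrow> y \<bullet> \<iota> v \<le> 0"
proof -
  have "v \<noteq> 0" using assms(2) Uni_norm by force
  then have iv: "\<iota> v \<noteq> 0" using inz by blast
  have "\<iota> y \<bullet> v = \<iota> y \<bullet> \<iota> (\<iota> v)" using ii by simp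
  also have "\<dots> = (y \<bullet> \<iota> v) / ((norm y)^2 * (norm (\<iota> v))^2)" using iinner[OF assms(1) iv] .
  finally have e: "\<iota> y \<bullet> v = (y \<bullet> \<iota> v) / ((norm y)^2 * (norm (\<iota> v))^2)" .
  have "(norm y)^2 * (norm (\<iota> v))^2 > 0" using assms(1) iv by simp
  then show ?thesis unfolding e by (simp add: divide_le_0_iff)
qed

lemma sigma_Z: "c \<in> Z2 \<Longrightarrow> 2 *\<^sub>R \<iota> c \<in> Z"
proof -
  assume c: "c \<in> Z2"
  then have "c \<noteq> 0" "c \<in> Z" "(norm c)^2 = 2" by (auto simp: Z2_def)
  then show ?thesis using nice unfolding nicely_invertible_def by force
qed

lemma rem_far: assumes "c \<in> Z" "c \<notin> Uni" "c \<notin> Z2" "c \<noteq> 0" "x \<in> D"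
  shows "1 \<le> dist x c"
proof -
  obtain k :: int where k: "(norm c)^2 = of_int k" using normsq_int[OF assms(1)] Ints_cases by metis
  have "k \<noteq> 1"
  proof
    assume "k = 1" then have "(norm c)^2 = 1" using k by simp
    then have "norm c = 1 \<or> norm c = -1" using power2_eq_1_iff by blast
    then have "norm c = 1" using norm_ge_zero[of c] by linarith
    then show False using assms(1,2) by (simp add: Uni_def)
  qed
  moreover have "k \<noteq> 2" using assms(1,3) k by (auto simp: Z2_def)
  moreover have "(norm c)^2 > 0" using assms(4) by simp
  then have "real_of_int k > 0" using k by simp
  then have "k > 0" by simp
  ultimately have "k = 3 \<or> k \<ge> 4" by presburger
  then show ?thesis
  proof
    assume "k = 3"
    then have "(norm c)^2 = 3" using k by simp
    then have "sqrt 3 = norm c" by (intro real_sqrt_unique) simp_all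
    then have "norm c = sqrt 3" by simp
    then have "(INF x\<in>D. dist c x) \<ge> 1" using tr assms(1) unfolding three_remote_def by blast
    moreover have "(INF x\<in>D. dist c x) \<le> dist c x"
      by (rule cINF_lower[OF _ assms(5)]) (auto intro: bdd_belowI[of _ 0])
    ultimately show ?thesis by (simp add: dist_commute)
  next
    assume "k \<ge> 4"
    then have "(norm c)^2 \<ge> 2^2" using k by simp
    then have "norm c \<ge> 2" using abs_le_square_iff[of 2 "norm c"] by simp
    moreover have "norm x \<le> rho" using rho assms(5) by blast
    moreover have "norm c - norm x \<le> norm (c - x)" by (rule norm_triangle_ineq2)
    moreover have "dist x c = norm (c - x)" by (simp add: dist_norm norm_minus_commute)
    ultimately show ?thesis using rho1 by linarith
  qed
qed

lemma rem_zero: "x \<in> D \<Longrightarrow> dist x 0 < 1"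
  using rho rho1 by fastforce

lemma closed_D: "closed D"
proof -
  have "x \<in> D \<longleftrightarrow> x \<in> (\<Inter>z\<in>Z. {x. (2 *\<^sub>R z) \<bullet> x \<le> (norm z)^2})" for x
    using D_iff[of x] by (simp add: inner_commute)
  then have eq: "D = (\<Inter>z\<in>Z. {x. (2 *\<^sub>R z) \<bullet> x \<le> (norm z)^2})" by (rule set_eqI)
  show ?thesis unfolding eq by (intro closed_INT ballI closed_halfspace_le)
qed

lemma DK_negl: "negligible (D - K)"
proof -
  let ?F = "(Z \<inter> cball 0 2) - {0}"
  have "D - K \<subseteq> (\<Union>z\<in>?F. {x. z \<bullet> x = (norm z)^2 / 2})"
  proof
    fix x assume x: "x \<in> D - K"
    obtain z where z: "z \<in> Z" "x - z \<in> K" using K_unique by blast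
    have "z \<noteq> 0" using x z by auto
    have xzD: "x - z \<in> D" using z K_D by blast
    have "2 * (x \<bullet> z) \<le> (norm z)^2" using x z D_iff by blast
    moreover have "2 * ((x - z) \<bullet> (-z)) \<le> (norm (-z))^2" using xzD Zneg[OF z(1)] D_iff by blast
    ultimately have eq: "2 * (x \<bullet> z) = (norm z)^2"
      by (simp add: inner_diff_left power2_norm_eq_inner)
    have "norm x \<le> rho" "norm (x - z) \<le> rho" using rho x xzD by auto
    moreover have "norm z \<le> norm x + norm (z - x)" by (rule norm_triangle_sub)
    moreover have "norm (z - x) = norm (x - z)" by (rule norm_minus_commute)
    ultimately have "norm z \<le> 2" using rho1 by linarith
    then have zF: "z \<in> ?F" using z(1) \<open>z \<noteq> 0\<close> by simp
    have "z \<bullet> x = (norm z)^2 / 2" using eq by (simp add: inner_commute)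
    then show "x \<in> (\<Union>z\<in>?F. {x. z \<bullet> x = (norm z)^2 / 2})"
      by (intro UN_I[OF zF]) simp
  qed
  moreover have "negligible (\<Union>z\<in>?F. {x. z \<bullet> x = (norm z)^2 / 2})"
  proof (rule negligible_Union)
    show "finite ((\<lambda>z. {x. z \<bullet> x = (norm z)^2 / 2}) ` ?F)" using finite_ball[of 2] by blast
    fix T assume "T \<in> (\<lambda>z. {x. z \<bullet> x = (norm z)^2 / 2}) ` ?F"
    then obtain z where "z \<noteq> 0" "T = {x. z \<bullet> x = (norm z)^2 / 2}" by blast
    then show "negligible T" using negligible_hyperplane by blast
  qed
  ultimately show ?thesis using negligible_subset by blast
qed

lemma closed_lebesgue: "closed S \<Longrightarrow> S \<in> sets lebesgue"
  by (simp add: borel_closed)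

lemma K_meas: "K \<in> sets lebesgue"
proof -
  have "negligible ((D - K) \<union> (K - D))" using DK_negl K_D by simp
  then show ?thesis using sets_negligible_symdiff closed_lebesgue[OF closed_D] by blast
qed


abbreviation "T \<equiv> cf_map \<iota> Z K"

lemma T_K: "T x \<in> K"
proof (cases "x = 0")
  case True then show ?thesis using zero_K by (simp add: cf_map_def)
next
  case False
  obtain z where z: "z \<in> Z" "\<iota> x - z \<in> K" using K_unique by blast
  have "lat_floor Z K (\<iota> x) = z" unfolding lat_floor_def
    by (rule the1_equality[OF K_unique]) (use z in auto)
  then show ?thesis using False z by (simp add: cf_map_def)
qed

lemma sum_nz: "y \<in> K \<Longrightarrow> a \<in> Z \<Longrightarrow> a \<noteq> 0 \<Longrightarrow> y + a \<noteq> 0"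
proof
  assume "y \<in> K" "a \<in> Z" "a \<noteq> 0" "y + a = 0"
  then have "y = - a" by (simp add: eq_neg_iff_add_eq_0)
  then have "y \<in> Z" using Zneg \<open>a \<in> Z\<close> by simp
  then have "y = 0" using ZD K_D \<open>y \<in> K\<close> by blast
  then show False using \<open>y + a = 0\<close> \<open>a \<noteq> 0\<close> by simp
qed

lemma T_inv: assumes "y \<in> K" "a \<in> Z" "a \<noteq> 0" shows "T (\<iota> (y + a)) = y"
proof -
  have "y + a \<noteq> 0" using sum_nz assms by blast
  then have "\<iota> (y + a) \<noteq> 0" using inz by blast
  then show ?thesis using lat_floor_eq[OF assms(1,2)] ii by (simp add: cf_map_def)
qed

lemma cyl_K: "cylinder \<iota> K s \<subseteq> K"
  by (cases s) auto

lemma KiK: assumes "x \<in> K" "y \<in> K" "x = \<iota> y" shows "y = 0"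
proof (rule ccontr)
  assume "y \<noteq> 0"
  have "norm y \<le> rho" "norm x \<le> rho" using rho K_D assms by auto
  then have "norm y < 1" "norm x < 1" using rho1 by auto
  moreover have "norm x = 1 / norm y" using inorm[OF \<open>y \<noteq> 0\<close>] assms(3) by simp
  ultimately show False using \<open>y \<noteq> 0\<close> by (simp add: divide_less_eq)
qed

lemma cyl_zero: "set s \<subseteq> Z \<Longrightarrow> 0 \<in> set s \<Longrightarrow> \<exists>p. cylinder \<iota> K s \<subseteq> {p}"
proof (induction s)
  case Nil then show ?case by simp
next
  case (Cons a s)
  show ?case
  proof (cases "a = 0")
    case True
    have "cylinder \<iota> K (a # s) \<subseteq> {0}"
    proof
      fix x assume "x \<in> cylinder \<iota> K (a # s)"
      then obtain y where "x \<in> K" "y \<in> cylinder \<iota> K s" "x = \<iota> y" using True by auto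
      then have "y = 0" using KiK cyl_K by blast
      then show "x \<in> {0}" using \<open>x = \<iota> y\<close> i0 by simp
    qed
    then show ?thesis by blast
  next
    case False
    then obtain p where "cylinder \<iota> K s \<subseteq> {p}" using Cons by auto
    then have "cylinder \<iota> K (a # s) \<subseteq> {\<iota> (p + a)}" by auto
    then show ?thesis by blast
  qed
qed

lemma cyl_snoc:
  assumes "set s \<subseteq> Z - {0}" "b \<in> Z" "b \<noteq> 0"
  shows "cylinder \<iota> K (s @ [b]) =
    {x \<in> cylinder \<iota> K s. (T ^^ length s) x \<noteq> 0 \<and> \<iota> ((T ^^ length s) x) - b \<in> K}"
  using assms(1)
proof (induction s)
  case Nil
  show ?case
  proof (rule set_eqI, rule iffI)
    fix x assume "x \<in> cylinder \<iota> K ([] @ [b])"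
    then obtain y where y: "x \<in> K" "y \<in> K" "x = \<iota> (y + b)" by auto
    have "y + b \<noteq> 0" using sum_nz y assms by blast
    then show "x \<in> {x \<in> cylinder \<iota> K []. (T ^^ length []) x \<noteq> 0 \<and> \<iota> ((T ^^ length []) x) - b \<in> K}"
      using y inz ii by auto
  next
    fix x assume "x \<in> {x \<in> cylinder \<iota> K []. (T ^^ length []) x \<noteq> 0 \<and> \<iota> ((T ^^ length []) x) - b \<in> K}"
    then have x: "x \<in> K" "\<iota> x - b \<in> K" by auto
    have h: "\<iota> x \<in> (\<lambda>x. x + b) ` K" using x(2) by (intro image_eqI[of _ _ "\<iota> x - b"]) simp_all
    have "x \<in> \<iota> ` ((\<lambda>x. x + b) ` K)" by (rule image_eqI[of x \<iota> "\<iota> x", OF _ h]) (simp add: ii)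
    then show "x \<in> cylinder \<iota> K ([] @ [b])" using x by auto
  qed
next
  case (Cons a s)
  have a: "a \<in> Z" "a \<noteq> 0" and s: "set s \<subseteq> Z - {0}" using Cons.prems by auto
  have IH: "cylinder \<iota> K (s @ [b]) =
    {x \<in> cylinder \<iota> K s. (T ^^ length s) x \<noteq> 0 \<and> \<iota> ((T ^^ length s) x) - b \<in> K}"
    using Cons.IH s by blast
  have key: "(T ^^ length (a # s)) (\<iota> (y + a)) = (T ^^ length s) y" if "y \<in> K" for y
  proof -
    have "(T ^^ Suc (length s)) (\<iota> (y + a)) = (T ^^ length s) (T (\<iota> (y + a)))"
      by (simp only: funpow_Suc_right comp_def)
    then show ?thesis using T_inv[OF that a] by simp
  qed
  show ?case
  proof (rule set_eqI, rule iffI)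
    fix x assume "x \<in> cylinder \<iota> K ((a # s) @ [b])"
    then obtain y where y: "x \<in> K" "y \<in> cylinder \<iota> K (s @ [b])" "x = \<iota> (y + a)" by auto
    have yK: "y \<in> K" using y(2) cyl_K by blast
    show "x \<in> {x \<in> cylinder \<iota> K (a # s). (T ^^ length (a # s)) x \<noteq> 0 \<and> \<iota> ((T ^^ length (a # s)) x) - b \<in> K}"
      using y IH key[OF yK] by auto
  next
    fix x assume x: "x \<in> {x \<in> cylinder \<iota> K (a # s). (T ^^ length (a # s)) x \<noteq> 0 \<and> \<iota> ((T ^^ length (a # s)) x) - b \<in> K}"
    then obtain y where y: "x \<in> K" "y \<in> cylinder \<iota> K s" "x = \<iota> (y + a)" by auto
    have yK: "y \<in> K" using y(2) cyl_K by blast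
    have "y \<in> cylinder \<iota> K (s @ [b])" using IH x y key[OF yK] by auto
    then show "x \<in> cylinder \<iota> K ((a # s) @ [b])" using y by auto
  qed
qed

definition "P s = (T ^^ length s) ` cylinder \<iota> K s"

lemma P_snoc:
  assumes "set s \<subseteq> Z - {0}" "b \<in> Z" "b \<noteq> 0"
  shows "P (s @ [b]) = {y \<in> K. \<iota> (y + b) \<in> P s}"
proof -
  let ?n = "length s"
  have "P (s @ [b]) = T ` ((T ^^ ?n) ` cylinder \<iota> K (s @ [b]))"
    unfolding P_def by (simp add: image_comp)
  also have "(T ^^ ?n) ` cylinder \<iota> K (s @ [b]) = {p \<in> P s. p \<noteq> 0 \<and> \<iota> p - b \<in> K}"
    unfolding cyl_snoc[OF assms] P_def by auto
  also have "T ` {p \<in> P s. p \<noteq> 0 \<and> \<iota> p - b \<in> K} = {y \<in> K. \<iota> (y + b) \<in> P s}"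
  proof (rule set_eqI, rule iffI)
    fix y assume "y \<in> T ` {p \<in> P s. p \<noteq> 0 \<and> \<iota> p - b \<in> K}"
    then obtain p where p: "p \<in> P s" "p \<noteq> 0" "\<iota> p - b \<in> K" "y = T p" by blast
    have "lat_floor Z K (\<iota> p) = b" using lat_floor_eq[OF p(3) assms(2)] by simp
    then have "y = \<iota> p - b" using p by (simp add: cf_map_def)
    then show "y \<in> {y \<in> K. \<iota> (y + b) \<in> P s}" using p ii by simp
  next
    fix y assume y: "y \<in> {y \<in> K. \<iota> (y + b) \<in> P s}"
    then have "y + b \<noteq> 0" using sum_nz assms by blast
    then have "\<iota> (y + b) \<noteq> 0" "\<iota> (\<iota> (y + b)) - b = y" using inz ii by auto
    moreover have "T (\<iota> (y + b)) = y" using T_inv y assms by blast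
    ultimately show "y \<in> T ` {p \<in> P s. p \<noteq> 0 \<and> \<iota> p - b \<in> K}" using y by (auto intro!: image_eqI[of _ _ "\<iota> (y + b)"])
  qed
  finally show ?thesis .
qed

lemma P_Nil: "P [] = K" unfolding P_def by simp

lemma Phi_inv: "set s \<subseteq> Z - {0} \<Longrightarrow> x \<in> cylinder \<iota> K s \<Longrightarrow> x = Phi \<iota> s ((T ^^ length s) x)"
proof (induction s arbitrary: x)
  case Nil then show ?case by simp
next
  case (Cons a s)
  then obtain y where y: "y \<in> cylinder \<iota> K s" "x = \<iota> (y + a)" by auto
  have a: "a \<in> Z" "a \<noteq> 0" using Cons.prems by auto
  have yK: "y \<in> K" using y cyl_K by blast
  have "(T ^^ Suc (length s)) x = (T ^^ length s) (T x)" by (simp only: funpow_Suc_right comp_def)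
  then have "(T ^^ length (a # s)) x = (T ^^ length s) y"
    using T_inv[OF yK a] y by simp
  then show ?case using Cons y by simp
qed

lemma negl_img: assumes "negligible N" shows "negligible ((\<lambda>q. \<iota> (q + a) + c) ` N)"
proof -
  let ?g = "\<lambda>q. \<iota> (q + a) + c"
  have "negligible (?g ` (N - {-a}))"
  proof (rule negligible_locally_Lipschitz_image)
    show "negligible (N - {-a})" by (rule negligible_subset[OF assms]) blast
    fix x assume x: "x \<in> N - {-a}"
    then have xa: "x + a \<noteq> 0" by (auto simp: add_eq_0_iff)
    define r where "r = norm (x + a) / 2"
    have "norm (x + a) > 0" using xa by simp
    then have r: "r > 0" using r_def by linarith
    have "\<forall>y \<in> (N - {-a}) \<inter> ball x r. norm (?g y - ?g x) \<le> (2 / (norm (x+a))^2) * norm (y - x)"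
    proof
      fix y assume y: "y \<in> (N - {-a}) \<inter> ball x r"
      then have dyx: "norm (y - x) < r" by (simp add: dist_norm norm_minus_commute)
      have "norm (x + a) \<le> norm (y + a) + norm (y - x)"
        using norm_triangle_sub[of "x + a" "y + a"] by (simp add: norm_minus_commute algebra_simps)
      then have ya: "norm (y + a) \<ge> norm (x + a) / 2" using dyx r_def by simp
      then have ya0: "y + a \<noteq> 0" using xa by auto
      have "norm (?g y - ?g x) = dist (\<iota> (y + a)) (\<iota> (x + a))" by (simp add: dist_norm)
      also have "\<dots> = dist (y + a) (x + a) / (norm (y + a) * norm (x + a))" using idist ya0 xa by blast
      also have "dist (y + a) (x + a) = norm (y - x)" by (simp add: dist_norm)
      also have "norm (y - x) / (norm (y + a) * norm (x + a)) \<le> norm (y - x) / (norm (x + a) / 2 * norm (x + a))"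
        using ya xa by (intro divide_left_mono mult_right_mono mult_pos_pos) auto
      also have "\<dots> = (2 / (norm (x+a))^2) * norm (y - x)" by (simp add: power2_eq_square)
      finally show "norm (?g y - ?g x) \<le> (2 / (norm (x+a))^2) * norm (y - x)" .
    qed
    then show "\<exists>T B. open T \<and> x \<in> T \<and> (\<forall>y \<in> (N - {-a}) \<inter> T. norm (?g y - ?g x) \<le> B * norm (y - x))"
      using r by (intro exI[of _ "ball x r"] exI[of _ "2 / (norm (x+a))^2"]) auto
  qed simp
  moreover have "?g ` N \<subseteq> ?g ` (N - {-a}) \<union> {\<iota> 0 + c}" by auto
  ultimately show ?thesis using negligible_subset by (metis negligible_insert insert_is_Un sup_commute)
qed

lemma negl_pre: assumes "negligible N" shows "negligible {y. \<iota> (y + b) \<in> N}"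
proof -
  have "{y. \<iota> (y + b) \<in> N} \<subseteq> (\<lambda>q. \<iota> (q + 0) + (-b)) ` N \<union> {-b}"
  proof
    fix y assume y: "y \<in> {y. \<iota> (y + b) \<in> N}"
    show "y \<in> (\<lambda>q. \<iota> (q + 0) + (-b)) ` N \<union> {-b}"
    proof (cases "y + b = 0")
      case True then show ?thesis by (simp add: eq_neg_iff_add_eq_0)
    next
      case False
      have "y = \<iota> (\<iota> (y + b) + 0) + (-b)" using ii by simp
      then show ?thesis using y by blast
    qed
  qed
  moreover have "negligible ((\<lambda>q. \<iota> (q + 0) + (-b)) ` N \<union> {-b})"
    using negl_img[OF assms, of 0 "-b"] by simp
  ultimately show ?thesis using negligible_subset by blast
qed

lemma negl_Phi: "negligible N \<Longrightarrow> negligible (Phi \<iota> s ` N)"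
proof (induction s)
  case Nil then show ?case by simp
next
  case (Cons a s)
  have "Phi \<iota> (a # s) ` N = (\<lambda>q. \<iota> (q + a) + 0) ` (Phi \<iota> s ` N)" by (auto simp: image_comp)
  then show ?case using negl_img Cons by presburger
qed


lemma ints_le0: "k \<in> \<int> \<Longrightarrow> k < 1 \<Longrightarrow> k \<le> (0::real)"
proof -
  assume "k \<in> \<int>" "k < 1"
  then obtain m :: int where m: "k = of_int m" by (metis Ints_cases)
  then have "m < 1" using \<open>k < 1\<close> by simp
  then have "m \<le> 0" by simp
  then show ?thesis using m by simp
qed

lemma hsA: assumes "y \<in> D" "w \<in> Uni" "k \<in> \<int>" "k \<le> 1"
  shows "(y \<bullet> w \<le> 1/2 - k/2) \<longleftrightarrow> (k = 1 \<longrightarrow> y \<bullet> w \<le> 0)"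
proof (cases "k = 1")
  case True then show ?thesis by simp
next
  case False
  then have "k - 1 < 1 - 1" using assms(4) by simp
  moreover have "k - 1 \<in> \<int>" using assms(3) by simp
  ultimately have "k - 1 \<le> -1" using ints_le0[of "k"] assms(3) False assms(4) by simp
  then have "k \<le> 0" by simp
  moreover have "2 * (y \<bullet> w) \<le> 1" using halfD assms by blast
  ultimately show ?thesis using False by simp
qed

lemma hsB: assumes "y \<in> D" "w \<in> Uni" "k \<in> \<int>" "k \<le> 0"
  shows "(y \<bullet> w \<le> - k/2) \<longleftrightarrow> (k = 0 \<longrightarrow> y \<bullet> w \<le> 0)"
proof (cases "k = 0")
  case True then show ?thesis by simp
next
  case False
  then have "k < 0" using assms(4) by simp
  then have "k + 1 \<le> 0" using ints_le0[of "k + 1"] assms(3) by simp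
  moreover have "2 * (y \<bullet> w) \<le> 1" using halfD assms by blast
  ultimately show ?thesis using False by simp
qed

definition "Good Pset \<longleftrightarrow> negligible Pset \<or>
  (\<exists>S V. S \<subseteq> Uni \<union> Z2 \<and> V \<subseteq> Uni \<and> negligible (sd Pset (K \<inter> W S V)))"

lemma G_char:
  assumes y: "y \<in> K" and b: "b \<in> Z" "b \<noteq> 0" and SV: "S \<subseteq> Uni \<union> Z2" "V \<subseteq> Uni"
  shows "\<iota> (y + b) \<in> D \<inter> W S V \<longleftrightarrow>
    (\<forall>v\<in>Uni. 1 \<le> dist y (v - b)) \<and> (\<forall>c\<in>S \<inter> Z2. 1 \<le> dist y (2 *\<^sub>R \<iota> c - b)) \<and>
    (\<forall>c\<in>S \<inter> Uni. y \<bullet> \<iota> c \<le> 1/2 - b \<bullet> \<iota> c) \<and> (\<forall>v\<in>V. y \<bullet> \<iota> v \<le> - (b \<bullet> \<iota> v))"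
proof -
  have y0: "y + b \<noteq> 0" using sum_nz y b by blast
  have e1: "\<iota> (y + b) \<in> D \<longleftrightarrow> (\<forall>v\<in>Uni. 1 \<le> dist y (v - b))"
  proof -
    have "dist (y + b) v = dist y (v - b)" for v by (simp add: dist_norm algebra_simps)
    then show ?thesis using L1[OF y0] by simp
  qed
  have e2: "1 \<le> dist (\<iota> (y + b)) c \<longleftrightarrow> y \<bullet> \<iota> c \<le> 1/2 - b \<bullet> \<iota> c" if "c \<in> Uni" for c
    using L3[OF y0 that] by (simp add: inner_add_left algebra_simps)
  have e3: "1 \<le> dist (\<iota> (y + b)) c \<longleftrightarrow> 1 \<le> dist y (2 *\<^sub>R \<iota> c - b)" if "c \<in> Z2" for c
  proof -
    have "dist (y + b) (2 *\<^sub>R \<iota> c) = dist y (2 *\<^sub>R \<iota> c - b)" by (simp add: dist_norm algebra_simps)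
    then show ?thesis using L2[OF y0 that] by simp
  qed
  have e4: "\<iota> (y + b) \<bullet> v \<le> 0 \<longleftrightarrow> y \<bullet> \<iota> v \<le> - (b \<bullet> \<iota> v)" if "v \<in> Uni" for v
  proof -
    have "\<iota> (y + b) \<bullet> v \<le> 0 \<longleftrightarrow> (y + b) \<bullet> \<iota> v \<le> 0" by (rule L4[OF y0 that])
    also have "\<dots> \<longleftrightarrow> y \<bullet> \<iota> v \<le> - (b \<bullet> \<iota> v)" unfolding inner_add_left by (intro iffI; linarith)
    finally show ?thesis .
  qed
  have e5: "\<iota> (y + b) \<in> W S V \<longleftrightarrow> (\<forall>c\<in>S \<inter> Z2. 1 \<le> dist y (2 *\<^sub>R \<iota> c - b)) \<and>
    (\<forall>c\<in>S \<inter> Uni. y \<bullet> \<iota> c \<le> 1/2 - b \<bullet> \<iota> c) \<and> (\<forall>v\<in>V. y \<bullet> \<iota> v \<le> - (b \<bullet> \<iota> v))"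
  proof
    assume "\<iota> (y + b) \<in> W S V"
    then have h1: "\<forall>c\<in>S. 1 \<le> dist (\<iota> (y + b)) c" and h2: "\<forall>v\<in>V. \<iota> (y + b) \<bullet> v \<le> 0"
      unfolding W_def by auto
    show "(\<forall>c\<in>S \<inter> Z2. 1 \<le> dist y (2 *\<^sub>R \<iota> c - b)) \<and>
      (\<forall>c\<in>S \<inter> Uni. y \<bullet> \<iota> c \<le> 1/2 - b \<bullet> \<iota> c) \<and> (\<forall>v\<in>V. y \<bullet> \<iota> v \<le> - (b \<bullet> \<iota> v))"
      using h1 h2 e2 e3 e4 SV by blast
  next
    assume h: "(\<forall>c\<in>S \<inter> Z2. 1 \<le> dist y (2 *\<^sub>R \<iota> c - b)) \<and>
      (\<forall>c\<in>S \<inter> Uni. y \<bullet> \<iota> c \<le> 1/2 - b \<bullet> \<iota> c) \<and> (\<forall>v\<in>V. y \<bullet> \<iota> v \<le> - (b \<bullet> \<iota> v))"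
    have "\<forall>c\<in>S. 1 \<le> dist (\<iota> (y + b)) c"
    proof
      fix c assume c: "c \<in> S"
      then have "c \<in> Uni \<or> c \<in> Z2" using SV by blast
      then show "1 \<le> dist (\<iota> (y + b)) c"
      proof
        assume "c \<in> Uni" then show ?thesis using e2 h c by blast
      next
        assume "c \<in> Z2" then show ?thesis using e3 h c by blast
      qed
    qed
    moreover have "\<forall>v\<in>V. \<iota> (y + b) \<bullet> v \<le> 0" using e4 h SV by blast
    ultimately show "\<iota> (y + b) \<in> W S V" unfolding W_def by blast
  qed
  show ?thesis using e1 e5 by blast
qed

lemma sd_negl_trans: "negligible (sd A B) \<Longrightarrow> negligible (sd B C) \<Longrightarrow> negligible (sd A C)"
proof -
  assume "negligible (sd A B)" "negligible (sd B C)"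
  then have "negligible (sd A B \<union> sd B C)" by (rule negligible_Un)
  moreover have "sd A C \<subseteq> sd A B \<union> sd B C" unfolding sd_def by blast
  ultimately show ?thesis using negligible_subset by blast
qed

lemma step: assumes b: "b \<in> Z" "b \<noteq> 0" and G: "Good Pset"
  shows "Good {y \<in> K. \<iota> (y + b) \<in> Pset}"
proof -
  let ?P' = "{y \<in> K. \<iota> (y + b) \<in> Pset}"
  show ?thesis
  proof (cases "negligible Pset")
    case True
    have n: "negligible {y. \<iota> (y + b) \<in> Pset}" by (rule negl_pre[OF True])
    have "negligible ?P'" by (rule negligible_subset[OF n]) blast
    then show ?thesis unfolding Good_def by (rule disjI1)
  next
    case False
    then obtain S V where SV: "S \<subseteq> Uni \<union> Z2" "V \<subseteq> Uni" and nPQ: "negligible (sd Pset (K \<inter> W S V))"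
      using G unfolding Good_def by blast
    let ?Q = "K \<inter> W S V"
    let ?Q'' = "{y \<in> K. \<iota> (y + b) \<in> D \<inter> W S V}"
    have n1: "negligible (sd ?P' ?Q'')"
    proof -
      have "sd ?P' ?Q'' \<subseteq> {y. \<iota> (y + b) \<in> sd Pset ?Q} \<union> {y. \<iota> (y + b) \<in> D - K}"
        using K_D unfolding sd_def by blast
      moreover have "negligible ({y. \<iota> (y + b) \<in> sd Pset ?Q} \<union> {y. \<iota> (y + b) \<in> D - K})"
        using negl_pre[OF nPQ] negl_pre[OF DK_negl] by (rule negligible_Un)
      ultimately show ?thesis using negligible_subset by blast
    qed
    define G where "G = {y. (\<forall>v\<in>Uni. 1 \<le> dist y (v - b)) \<and> (\<forall>c\<in>S \<inter> Z2. 1 \<le> dist y (2 *\<^sub>R \<iota> c - b)) \<and>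
      (\<forall>c\<in>S \<inter> Uni. y \<bullet> \<iota> c \<le> 1/2 - b \<bullet> \<iota> c) \<and> (\<forall>v\<in>V. y \<bullet> \<iota> v \<le> - (b \<bullet> \<iota> v))}"
    have QG: "?Q'' = K \<inter> G"
      using G_char[OF _ b SV] unfolding G_def by blast
    have negP': "negligible ?P'" if "negligible (K \<inter> G)"
    proof -
      have "?P' \<subseteq> sd ?P' ?Q'' \<union> ?Q''" unfolding sd_def by blast
      moreover have "negligible (sd ?P' ?Q'' \<union> ?Q'')" using n1 that QG by (simp add: negligible_Un)
      ultimately show ?thesis using negligible_subset by blast
    qed
    show ?thesis
    proof (cases "(\<exists>c\<in>S \<inter> Uni. 1 \<le> b \<bullet> \<iota> c) \<or> (\<exists>v\<in>V. 1/2 \<le> b \<bullet> \<iota> v)")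
      case True
      then obtain w where w: "w \<in> Uni" and wsub: "K \<inter> G \<subseteq> {y. y \<bullet> w \<le> -1/2}"
      proof
        assume "\<exists>c\<in>S \<inter> Uni. 1 \<le> b \<bullet> \<iota> c"
        then obtain c where c: "c \<in> S \<inter> Uni" "1 \<le> b \<bullet> \<iota> c" by blast
        have "K \<inter> G \<subseteq> {y. y \<bullet> \<iota> c \<le> -1/2}" using c unfolding G_def by force
        moreover have "\<iota> c \<in> Uni" using c Uni_i by blast
        ultimately show thesis using that by blast
      next
        assume "\<exists>v\<in>V. 1/2 \<le> b \<bullet> \<iota> v"
        then obtain v where v: "v \<in> V" "1/2 \<le> b \<bullet> \<iota> v" by blast
        have "K \<inter> G \<subseteq> {y. y \<bullet> \<iota> v \<le> -1/2}" using v unfolding G_def by force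
        moreover have "\<iota> v \<in> Uni" using v SV Uni_i by blast
        ultimately show thesis using that by blast
      qed
      have "K \<inter> G \<subseteq> {y. w \<bullet> y = -1/2}"
      proof
        fix y assume y: "y \<in> K \<inter> G"
        have "2 * (y \<bullet> (-w)) \<le> 1" using halfD[of y "-w"] y K_D Uni_neg[OF w] by blast
        moreover have "y \<bullet> w \<le> -1/2" using y wsub by blast
        ultimately show "y \<in> {y. w \<bullet> y = -1/2}" by (simp add: inner_commute)
      qed
      moreover have "w \<noteq> 0" using w Uni_norm by force
      ultimately have "negligible (K \<inter> G)" using negligible_hyperplane negligible_subset by blast
      then show ?thesis using negP' unfolding Good_def by blast
    next
      case False
      then have cS: "\<forall>c\<in>S \<inter> Uni. 2 * (b \<bullet> \<iota> c) \<le> 1" and vV: "\<forall>v\<in>V. 2 * (b \<bullet> \<iota> v) \<le> 0"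
      proof -
        show "\<forall>c\<in>S \<inter> Uni. 2 * (b \<bullet> \<iota> c) \<le> 1"
        proof
          fix c assume c: "c \<in> S \<inter> Uni"
          have "2 * (b \<bullet> \<iota> c) - 1 \<in> \<int>" using half_int[OF b(1), of "\<iota> c"] Uni_i Uni_Z c by auto
          moreover have "\<not> 1 \<le> b \<bullet> \<iota> c" using False c by blast
          then have "2 * (b \<bullet> \<iota> c) - 1 < 1" by linarith
          ultimately show "2 * (b \<bullet> \<iota> c) \<le> 1" using ints_le0 by fastforce
        qed
        show "\<forall>v\<in>V. 2 * (b \<bullet> \<iota> v) \<le> 0"
        proof
          fix v assume v: "v \<in> V"
          have "2 * (b \<bullet> \<iota> v) \<in> \<int>" using half_int[OF b(1), of "\<iota> v"] Uni_i Uni_Z v SV by blast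
          moreover have "\<not> 1/2 \<le> b \<bullet> \<iota> v" using False v by blast
          then have "2 * (b \<bullet> \<iota> v) < 1" by linarith
          ultimately show "2 * (b \<bullet> \<iota> v) \<le> 0" using ints_le0 by blast
        qed
      qed
      define S1 where "S1 = (\<lambda>v. v - b) ` Uni \<union> (\<lambda>c. 2 *\<^sub>R \<iota> c - b) ` (S \<inter> Z2)"
      define V1 where "V1 = \<iota> ` {c\<in>S \<inter> Uni. 2 * (b \<bullet> \<iota> c) = 1} \<union> \<iota> ` {v\<in>V. 2 * (b \<bullet> \<iota> v) = 0}"
      have S1Z: "S1 \<subseteq> Z" unfolding S1_def using Zdiff b Uni_Z sigma_Z by blast
      have V1U: "V1 \<subseteq> Uni" unfolding V1_def using Uni_i SV by blast
      have KG: "K \<inter> G = K \<inter> W S1 V1"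
      proof (rule set_eqI)
        fix y
        show "y \<in> K \<inter> G \<longleftrightarrow> y \<in> K \<inter> W S1 V1"
        proof (cases "y \<in> K")
          case False then show ?thesis by simp
        next
          case True
          then have yD: "y \<in> D" using K_D by blast
          have A: "(\<forall>c\<in>S \<inter> Uni. y \<bullet> \<iota> c \<le> 1/2 - b \<bullet> \<iota> c) \<longleftrightarrow>
                   (\<forall>c\<in>S \<inter> Uni. 2 * (b \<bullet> \<iota> c) = 1 \<longrightarrow> y \<bullet> \<iota> c \<le> 0)"
          proof -
            have "(y \<bullet> \<iota> c \<le> 1/2 - b \<bullet> \<iota> c) \<longleftrightarrow> (2 * (b \<bullet> \<iota> c) = 1 \<longrightarrow> y \<bullet> \<iota> c \<le> 0)"
              if c: "c \<in> S \<inter> Uni" for c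
            proof -
              have "2 * (b \<bullet> \<iota> c) \<in> \<int>" using half_int[OF b(1), of "\<iota> c"] Uni_i Uni_Z c by blast
              then show ?thesis using hsA[OF yD Uni_i[of c], of "2 * (b \<bullet> \<iota> c)"] cS c by auto
            qed
            then show ?thesis by blast
          qed
          have B: "(\<forall>v\<in>V. y \<bullet> \<iota> v \<le> - (b \<bullet> \<iota> v)) \<longleftrightarrow>
                   (\<forall>v\<in>V. 2 * (b \<bullet> \<iota> v) = 0 \<longrightarrow> y \<bullet> \<iota> v \<le> 0)"
          proof -
            have "(y \<bullet> \<iota> v \<le> - (b \<bullet> \<iota> v)) \<longleftrightarrow> (2 * (b \<bullet> \<iota> v) = 0 \<longrightarrow> y \<bullet> \<iota> v \<le> 0)"
              if v: "v \<in> V" for v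
            proof -
              have vU: "v \<in> Uni" using v SV by blast
              have "2 * (b \<bullet> \<iota> v) \<in> \<int>" using half_int[OF b(1), of "\<iota> v"] Uni_i Uni_Z vU by blast
              then show ?thesis using hsB[OF yD Uni_i[OF vU], of "2 * (b \<bullet> \<iota> v)"] vV v by auto
            qed
            then show ?thesis by blast
          qed
          have C: "(\<forall>c\<in>S1. 1 \<le> dist y c) \<longleftrightarrow>
             (\<forall>v\<in>Uni. 1 \<le> dist y (v - b)) \<and> (\<forall>c\<in>S \<inter> Z2. 1 \<le> dist y (2 *\<^sub>R \<iota> c - b))"
            unfolding S1_def by blast
          have D': "(\<forall>w\<in>V1. y \<bullet> w \<le> 0) \<longleftrightarrow>
             (\<forall>c\<in>S \<inter> Uni. 2 * (b \<bullet> \<iota> c) = 1 \<longrightarrow> y \<bullet> \<iota> c \<le> 0) \<and> (\<forall>v\<in>V. 2 * (b \<bullet> \<iota> v) = 0 \<longrightarrow> y \<bullet> \<iota> v \<le> 0)"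
            unfolding V1_def by blast
          show ?thesis using True A B C D' unfolding G_def W_def by blast
        qed
      qed
      show ?thesis
      proof (cases "0 \<in> S1")
        case True
        have "K \<inter> W S1 V1 = {}" using True rem_zero K_D unfolding W_def by fastforce
        then show ?thesis using negP' KG unfolding Good_def by simp
      next
        case False
        define S2 where "S2 = S1 \<inter> (Uni \<union> Z2)"
        have "K \<inter> W S1 V1 = K \<inter> W S2 V1"
        proof (rule set_eqI)
          fix y
          show "y \<in> K \<inter> W S1 V1 \<longleftrightarrow> y \<in> K \<inter> W S2 V1"
          proof
            assume "y \<in> K \<inter> W S2 V1"
            then have y: "y \<in> K" "\<forall>c\<in>S2. 1 \<le> dist y c" "\<forall>v\<in>V1. y \<bullet> v \<le> 0" unfolding W_def by auto
            have "\<forall>c\<in>S1. 1 \<le> dist y c"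
            proof
              fix c assume c: "c \<in> S1"
              show "1 \<le> dist y c"
              proof (cases "c \<in> Uni \<union> Z2")
                case True then show ?thesis using y c S2_def by blast
              next
                case nc: False
                have "c \<noteq> 0" using c False by blast
                then show ?thesis using rem_far[of c y] nc c S1Z y K_D by blast
              qed
            qed
            then show "y \<in> K \<inter> W S1 V1" using y unfolding W_def by blast
          qed (auto simp: W_def S2_def)
        qed
        moreover have "S2 \<subseteq> Uni \<union> Z2" unfolding S2_def by blast
        moreover have "negligible (sd ?P' (K \<inter> W S2 V1))" using n1 QG KG calculation(1) by simp
        ultimately show ?thesis using V1U unfolding Good_def by blast
      qed
    qed
  qed
qed

lemma Good_P: "set s \<subseteq> Z - {0} \<Longrightarrow> Good (P s)"
proof (induction s rule: rev_induct)
  case Nil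
  have "sd K (K \<inter> W {} {}) = {}" unfolding sd_def W_def by auto
  then show ?case unfolding Good_def P_Nil by force
next
  case (snoc b s)
  then have s: "set s \<subseteq> Z - {0}" and b: "b \<in> Z" "b \<noteq> 0" by auto
  show ?case unfolding P_snoc[OF s b] using step[OF b] snoc.IH[OF s] by blast
qed

end

lemma closed_W: "closed (W S V)"
proof -
  have "W S V = (\<Inter>c\<in>S. - ball c 1) \<inter> (\<Inter>v\<in>V. {x. v \<bullet> x \<le> 0})"
    unfolding W_def by (auto simp: dist_commute inner_commute not_less)
  then show ?thesis by (simp add: closed_INT closed_Int closed_halfspace_le open_ball closed_Compl)
qed

theorem lemma4p8:
  fixes \<iota> :: "'a::euclidean_space \<Rightarrow> 'a" and Z K :: "'a set"
  assumes "is_lattice Z"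
    and "is_inversion \<iota>"
    and "is_boundary_choice Z K"
    and "integral_lattice Z"
    and "nicely_invertible \<iota> Z"
    and "norm_euclidean (dirichlet Z)"
    and "unit_generated Z"
    and "three_remote Z (dirichlet Z)"
  shows "\<exists>\<U>. finite \<U> \<and>
           (\<forall>U\<in>\<U>. U \<subseteq> K \<and> U \<in> sets lebesgue \<and> emeasure lebesgue U > 0) \<and>
           (\<forall>s. set s \<subseteq> Z \<longrightarrow> emeasure lebesgue (cylinder \<iota> K s) > 0 \<longrightarrow>
              (\<exists>U\<in>\<U>. ae_eq ((cf_map \<iota> Z K ^^ length s) ` cylinder \<iota> K s) U))"
proof -
  interpret cfs \<iota> Z K using assms by unfold_locales
  let ?f = "\<lambda>(S, V). K \<inter> W S V"
  define UU where "UU = ?f ` {(S, V). S \<subseteq> Uni \<union> Z2 \<and> V \<subseteq> Uni \<and> emeasure lebesgue (K \<inter> W S V) > 0}"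
  have fin: "finite UU"
  proof -
    have "{(S, V). S \<subseteq> Uni \<union> Z2 \<and> V \<subseteq> Uni \<and> emeasure lebesgue (K \<inter> W S V) > 0} \<subseteq> Pow (Uni \<union> Z2) \<times> Pow Uni"
      by blast
    then have h1: "UU \<subseteq> ?f ` (Pow (Uni \<union> Z2) \<times> Pow Uni)" unfolding UU_def by (rule image_mono)
    have h2: "finite (Pow (Uni \<union> Z2) \<times> Pow Uni)" using finite_Uni finite_Z2 by simp
    show ?thesis by (rule finite_subset[OF h1 finite_imageI[OF h2]])
  qed
  have meas: "K \<inter> W S V \<in> sets lebesgue" for S V
    using K_meas closed_lebesgue[OF closed_W] by blast
  have props: "\<forall>U\<in>UU. U \<subseteq> K \<and> U \<in> sets lebesgue \<and> emeasure lebesgue U > 0"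
    unfolding UU_def using meas by auto
  have main: "\<exists>U\<in>UU. ae_eq ((cf_map \<iota> Z K ^^ length s) ` cylinder \<iota> K s) U"
    if s: "set s \<subseteq> Z" and pos: "emeasure lebesgue (cylinder \<iota> K s) > 0" for s
  proof -
    have nC: "\<not> negligible (cylinder \<iota> K s)"
    proof
      assume "negligible (cylinder \<iota> K s)"
      then have "cylinder \<iota> K s \<in> null_sets lebesgue" using negligible_iff_null_sets by blast
      then show False using pos by (simp add: null_setsD1)
    qed
    have "0 \<notin> set s"
    proof
      assume "0 \<in> set s"
      then obtain p where "cylinder \<iota> K s \<subseteq> {p}" using cyl_zero s by blast
      then show False using nC negligible_subset negligible_sing by blast
    qed
    then have sZ: "set s \<subseteq> Z - {0}" using s by blast
    have G: "Good (P s)" using Good_P[OF sZ] .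
    have nP: "\<not> negligible (P s)"
    proof
      assume "negligible (P s)"
      then have "negligible (Phi \<iota> s ` P s)" by (rule negl_Phi)
      moreover have "cylinder \<iota> K s \<subseteq> Phi \<iota> s ` P s"
        unfolding P_def using Phi_inv[OF sZ] by blast
      ultimately show False using nC negligible_subset by blast
    qed
    then obtain S V where SV: "S \<subseteq> Uni \<union> Z2" "V \<subseteq> Uni" and nsd: "negligible (sd (P s) (K \<inter> W S V))"
      using G unfolding Good_def by blast
    have nKW: "\<not> negligible (K \<inter> W S V)"
    proof
      assume "negligible (K \<inter> W S V)"
      then have "negligible (sd (P s) (K \<inter> W S V) \<union> (K \<inter> W S V))" using nsd by (simp add: negligible_Un)
      moreover have "P s \<subseteq> sd (P s) (K \<inter> W S V) \<union> (K \<inter> W S V)" unfolding sd_def by blast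
      ultimately show False using nP negligible_subset by blast
    qed
    then have "emeasure lebesgue (K \<inter> W S V) \<noteq> 0" using negligible_iff_emeasure0[OF meas] by blast
    then have "emeasure lebesgue (K \<inter> W S V) > 0" by (simp add: zero_less_iff_neq_zero)
    then have "K \<inter> W S V \<in> UU" unfolding UU_def using SV by blast
    moreover have "ae_eq ((cf_map \<iota> Z K ^^ length s) ` cylinder \<iota> K s) (K \<inter> W S V)"
      using nsd unfolding ae_eq_def sd_def P_def negligible_iff_null_sets by simp
    ultimately show ?thesis by blast
  qed
  show ?thesis using fin props main by blast
qed

end
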